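(* Let $r\ge d\ge1$ be integers. Then: (i) $g^{r,d}_0$ is the $f$-vector of a simplicial complex. (ii) For $1\le k\le r$, $g^{r,d}_k$ is admissible for $g^{r,d}_0$. (iii) If $d$ is odd and $k\ge d/2$, then $\hat g^{r,d}_k$ is admissible for $(g^{r,d}_0,0)$.
   Context: For integers $r\ge0$, $d\ge1$ and $i\in\mathbb Z$, $C(r,d,i)$ denotes the number of integer vectors $(u_1,\dots,u_d)$ with $u_1+\cdots+u_d=i$ and $0\le u_l\le r$ for all $l$. For integers $d\ge1$, $r\ge1$, $k\ge0$: if $0\le k\le r-1$, let $\hat g^{r,d}_k=(g_0,g_1,\dots,g_{\lfloor d/2\rfloor+1})\in\mathbb Z^{\lfloor d/2\rfloor+2}$ with $g_0=C(r-1,d,-k)=\delta_{0,k}$ and $g_i=C(r-1,d,ir-k)-C(r-1,d,(i-1)r-k)$ for $1\le i\le\lfloor d/2\rfloor+1$; if $k\ge r$, $\hat g^{r,d}_k$ is the zero vector. The vector $g^{r,d}_k\in\mathbb Z^{\lfloor d/2\rfloor+1}$ is obtained from $\hat g^{r,d}_k$ by deleting its last entry; $(v,0)$ denotes $v$ with a $0$ appended. A vector $(1,f_0,\dots,f_m)\in\mathbb Z^{m+2}$ is called the $f$-vector of a simplicial complex if there is a simplicial complex $\Delta$ with $f_{i}(\Delta)=f_i$ for $0\le i\le m$ and no faces of dimension $>m$ (so trailing zero entries are allowed; $f_i(\Delta)$ is the number of faces of dimension $i$). Let $f=(1,f_0,\dots,f_m)\in\mathbb Z^{m+2}$ be the $f$-vector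 of a simplicial complex. A vector $\alpha\in\mathbb Z^{m+2}$ is a basic admissible vector for $f$ if $\alpha=(0,1,\alpha_0,\dots,\alpha_{m-1})$ where $(1,\alpha_0,\dots,\alpha_{m-1})$ is the $f$-vector of a simplicial complex and $\alpha_i\le f_i$ for $0\le i\le m-1$. A vector $\beta\in\mathbb Z^{m+2}$ is admissible for $f$ if there are $t\ge0$ vectors $\beta^{(1)},\dots,\beta^{(t)}\in\mathbb Z^{m+2}$ with $\beta=\beta^{(1)}+\cdots+\beta^{(t)}$ such that $\beta^{(j)}$ is a basic admissible vector for $f+\beta^{(1)}+\cdots+\beta^{(j-1)}$ for each $1\le j\le t$ (for $t=0$, $\beta$ is the zero vector). *)

theory Defs
  imports Main
begin

text \<open>Vectors in Z^n are represented as int lists of length n.\<close>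

definition Ccount :: "nat \<Rightarrow> nat \<Rightarrow> int \<Rightarrow> nat" where
  "Ccount r d i = card {u :: int list. length u = d \<and> sum_list u = i \<and>
                         (\<forall>x\<in>set u. 0 \<le> x \<and> x \<le> int r)}"

definition ghat :: "nat \<Rightarrow> nat \<Rightarrow> nat \<Rightarrow> int list" where
  "ghat r d k = (if k < r then
      map (\<lambda>i. if i = 0 then int (Ccount (r - 1) d (- int k))
                else int (Ccount (r - 1) d (int i * int r - int k))
                   - int (Ccount (r - 1) d ((int i - 1) * int r - int k)))
          [0..<d div 2 + 2]
    else replicate (d div 2 + 2) 0)"

definition gvec :: "nat \<Rightarrow> nat \<Rightarrow> nat \<Rightarrow> int list" where
  "gvec r d k = butlast (ghat r d k)"

text \<open>A list v = (1, f_0, ..., f_m) of length m+2 is the f-vector of a simplicial complex: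
  entry j counts faces of cardinality j (dimension j-1); no faces of dimension > m.\<close>
definition is_fvector :: "int list \<Rightarrow> bool" where
  "is_fvector v \<longleftrightarrow> v \<noteq> [] \<and> hd v = 1 \<and>
     (\<exists>\<Delta> :: nat set set. finite \<Delta> \<and> (\<forall>F\<in>\<Delta>. finite F) \<and>
        (\<forall>F\<in>\<Delta>. \<forall>G. G \<subseteq> F \<longrightarrow> G \<in> \<Delta>) \<and>
        (\<forall>F\<in>\<Delta>. card F < length v) \<and>
        (\<forall>j<length v. int (card {F\<in>\<Delta>. card F = j}) = v ! j))"

definition vadd :: "int list \<Rightarrow> int list \<Rightarrow> int list" where
  "vadd a b = map2 (+) a b"

text \<open>alpha = (0, 1, alpha_0, ..., alpha_{m-1}) basic admissible for f = (1, f_0, ..., f_m).\<close>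
definition basic_admissible :: "int list \<Rightarrow> int list \<Rightarrow> bool" where
  "basic_admissible f \<alpha> \<longleftrightarrow> length \<alpha> = length f \<and> length f \<ge> 2 \<and>
     \<alpha> ! 0 = 0 \<and> \<alpha> ! 1 = 1 \<and> is_fvector (drop 1 \<alpha>) \<and>
     (\<forall>j. 2 \<le> j \<and> j < length f \<longrightarrow> \<alpha> ! j \<le> f ! (j - 1))"

definition vsum :: "nat \<Rightarrow> int list list \<Rightarrow> int list" where
  "vsum n bs = foldr vadd bs (replicate n 0)"

definition admissible :: "int list \<Rightarrow> int list \<Rightarrow> bool" where
  "admissible f \<beta> \<longleftrightarrow> (\<exists>bs :: int list list.
     \<beta> = vsum (length f) bs \<and>
     (\<forall>j<length bs. basic_admissible (vadd f (vsum (length f) (take j bs))) (bs ! j)))"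

end

theory Submission
  imports Defs
begin

fun PP :: "nat \<Rightarrow> nat \<Rightarrow> int \<Rightarrow> int" where
  "PP r 0 n = (if n = 0 then 1 else 0)"
| "PP r (Suc d) n = (\<Sum>j<r. PP r d (n - int j))"

lemma PP_neg: "n < 0 \<Longrightarrow> PP r d n = 0"
  by (induction d arbitrary: n) auto

lemma PP_nonneg: "PP r d n \<ge> 0"
  by (induction d arbitrary: n) (auto intro: sum_nonneg)

lemma PP_zero: "r \<ge> 1 \<Longrightarrow> PP r d 0 = 1"
proof (induction d)
  case (Suc d)
  have "(\<Sum>j<r. PP r d (0 - int j)) = (\<Sum>j\<in>{0}. PP r d (0 - int j))"
    by (rule sum.mono_neutral_right) (use Suc in \<open>auto intro: PP_neg\<close>)
  then show ?case using Suc by simp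
qed simp

definition CS :: "nat \<Rightarrow> nat \<Rightarrow> int \<Rightarrow> int list set" where
  "CS s d n = {u :: int list. length u = d \<and> sum_list u = n \<and> (\<forall>x\<in>set u. 0 \<le> x \<and> x \<le> int s)}"

lemma CS_finite: "finite (CS s d n)"
proof -
  have "CS s d n \<subseteq> {u. set u \<subseteq> {0..int s} \<and> length u = d}"
    unfolding CS_def by auto
  moreover have "finite {u. set u \<subseteq> {0..int s} \<and> length u = d}"
    by (rule finite_lists_length_eq) simp
  ultimately show ?thesis by (rule finite_subset)
qed

lemma CS_0: "CS s 0 n = (if n = 0 then {[]} else {})"
  unfolding CS_def by auto

lemma CS_Suc: "CS s (Suc d) n = (\<Union>j\<in>{0..s}. (\<lambda>v. int j # v) ` CS s d (n - int j))"
proof (rule set_eqI)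
  fix u
  show "u \<in> CS s (Suc d) n \<longleftrightarrow> u \<in> (\<Union>j\<in>{0..s}. (\<lambda>v. int j # v) ` CS s d (n - int j))"
  proof
    assume "u \<in> CS s (Suc d) n"
    then obtain x v where u: "u = x # v" and l: "length v = d" and sm: "x + sum_list v = n"
      and b: "0 \<le> x" "x \<le> int s" "\<forall>y\<in>set v. 0 \<le> y \<and> y \<le> int s"
      unfolding CS_def by (cases u) auto
    have "x = int (nat x)" using b by simp
    moreover have "nat x \<in> {0..s}" using b by auto
    moreover have "v \<in> CS s d (n - int (nat x))" using l sm b unfolding CS_def by auto
    ultimately show "u \<in> (\<Union>j\<in>{0..s}. (\<lambda>v. int j # v) ` CS s d (n - int j))"
      using u by (metis (no_types, lifting) UN_iff image_eqI)
  next
    assume "u \<in> (\<Union>j\<in>{0..s}. (\<lambda>v. int j # v) ` CS s d (n - int j))"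
    then show "u \<in> CS s (Suc d) n" unfolding CS_def by auto
  qed
qed

lemma Ccount_CS: "Ccount s d n = card (CS s d n)"
  unfolding Ccount_def CS_def ..

lemma Ccount_Suc: "int (Ccount s (Suc d) n) = (\<Sum>j\<in>{0..s}. int (Ccount s d (n - int j)))"
proof -
  have "card (CS s (Suc d) n) = (\<Sum>j\<in>{0..s}. card ((\<lambda>v. int j # v) ` CS s d (n - int j)))"
    unfolding CS_Suc
    by (rule card_UN_disjoint) (auto simp: CS_finite)
  also have "\<dots> = (\<Sum>j\<in>{0..s}. card (CS s d (n - int j)))"
    by (rule sum.cong) (auto simp: card_image inj_on_def)
  finally show ?thesis unfolding Ccount_CS by simp
qed

lemma Ccount_PP: "r \<ge> 1 \<Longrightarrow> int (Ccount (r - 1) d n) = PP r d n"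
proof (induction d arbitrary: n)
  case 0
  then show ?case unfolding Ccount_CS CS_0 by simp
next
  case (Suc d)
  have "{0..r-1} = {..<r}" using Suc.prems by auto
  then show ?case using Suc by (simp add: Ccount_Suc)
qed


lemma PP_sym: "r \<ge> 1 \<Longrightarrow> PP r d n = PP r d (int d * (int r - 1) - n)"
proof (induction d arbitrary: n)
  case 0
  then show ?case by simp
next
  case (Suc d)
  have "PP r (Suc d) (int (Suc d) * (int r - 1) - n)
      = (\<Sum>j<r. PP r d (int (Suc d) * (int r - 1) - n - int j))" by (simp only: PP.simps)
  also have "\<dots> = (\<Sum>j<r. PP r d (int d * (int r - 1) - (n - (int r - 1 - int j))))"
    by (rule sum.cong[OF refl]) (simp add: algebra_simps)
  also have "\<dots> = (\<Sum>j<r. PP r d (n - (int r - 1 - int j)))"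
    by (rule sum.cong[OF refl]) (rule Suc.IH[OF Suc.prems, symmetric])
  also have "\<dots> = (\<Sum>j<r. PP r d (n - int (r - Suc j)))"
    by (rule sum.cong; simp add: of_nat_diff Suc_le_eq algebra_simps)
  also have "\<dots> = (\<Sum>j<r. PP r d (n - int j))"
    by (rule sum.nat_diff_reindex)
  finally show ?case by simp
qed

lemma PP_diff:
  assumes "r \<ge> 1"
  shows "PP r (Suc d) (n + 1) - PP r (Suc d) n = PP r d (n + 1) - PP r d (n + 1 - int r)"
proof -
  obtain r' where r: "r = Suc r'" using assms by (cases r) auto
  have a: "(\<Sum>j<Suc r'. PP r d (n + 1 - int j)) = PP r d (n + 1) + (\<Sum>j<r'. PP r d (n - int j))"
  proof -
    have "(\<Sum>j<Suc r'. PP r d (n + 1 - int j)) = PP r d (n + 1 - int 0) + (\<Sum>j<r'. PP r d (n + 1 - int (Suc j)))"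
      by (rule sum.lessThan_Suc_shift)
    moreover have "(\<Sum>j<r'. PP r d (n + 1 - int (Suc j))) = (\<Sum>j<r'. PP r d (n - int j))"
      by (rule sum.cong[OF refl]) simp
    ultimately show ?thesis by simp
  qed
  have b: "(\<Sum>j<Suc r'. PP r d (n - int j)) = (\<Sum>j<r'. PP r d (n - int j)) + PP r d (n - int r')"
    by (rule sum.lessThan_Suc)
  have c: "n - int r' = n + 1 - int r" using r by simp
  have "PP r (Suc d) (n + 1) = (\<Sum>j<Suc r'. PP r d (n + 1 - int j))" using r by (simp only: PP.simps)
  moreover have "PP r (Suc d) n = (\<Sum>j<Suc r'. PP r d (n - int j))" using r by (simp only: PP.simps)
  ultimately show ?thesis using a b c by simp
qed

declare PP.simps(2)[simp del]

definition UM :: "nat \<Rightarrow> nat \<Rightarrow> bool" where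
  "UM r d \<longleftrightarrow> (\<forall>a b. \<bar>2 * a - int d * (int r - 1)\<bar> \<le> \<bar>2 * b - int d * (int r - 1)\<bar> \<longrightarrow> PP r d b \<le> PP r d a)"

lemma UM_0: "UM r 0"
  unfolding UM_def using PP_nonneg by auto

lemma UM_Suc:
  assumes r: "r \<ge> 1" and U: "UM r d"
  shows "UM r (Suc d)"
proof -
  define D where "D = int (Suc d) * (int r - 1)"
  have step: "PP r (Suc d) n \<le> PP r (Suc d) (n + 1)" if "2 * (n + 1) \<le> D" for n
  proof -
    define x where "x = 2 * (n + 1) - int d * (int r - 1)"
    have "x \<le> int r - 1" using that unfolding x_def D_def by (simp add: algebra_simps)
    then have "\<bar>x\<bar> \<le> \<bar>x - 2 * int r\<bar>" using r by arith
    moreover have "2 * (n + 1 - int r) - int d * (int r - 1) = x - 2 * int r" unfolding x_def by simp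
    ultimately have "\<bar>2 * (n + 1) - int d * (int r - 1)\<bar> \<le> \<bar>2 * (n + 1 - int r) - int d * (int r - 1)\<bar>"
      unfolding x_def by simp
    then have "PP r d (n + 1 - int r) \<le> PP r d (n + 1)" using U unfolding UM_def by blast
    then show ?thesis using PP_diff[OF r, of d n] by linarith
  qed
  have mono: "PP r (Suc d) x \<le> PP r (Suc d) (x + int t)" if "2 * (x + int t) \<le> D" for x t
    using that
  proof (induction t)
    case 0 then show ?case by simp
  next
    case (Suc t)
    have e: "x + int (Suc t) = x + int t + 1" by simp
    have "PP r (Suc d) x \<le> PP r (Suc d) (x + int t)" using Suc by (simp del: PP.simps)
    also have "\<dots> \<le> PP r (Suc d) (x + int t + 1)" using step[of "x + int t"] Suc.prems e by (simp del: PP.simps)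
    finally show ?case using e by (simp only: e)
  qed
  have mono2: "PP r (Suc d) x \<le> PP r (Suc d) y" if "x \<le> y" "2 * y \<le> D" for x y
    using mono[of x "nat (y - x)"] that by simp
  have sym: "PP r (Suc d) n = PP r (Suc d) (D - n)" for n
    unfolding D_def by (rule PP_sym[OF r])
  show ?thesis unfolding UM_def
  proof (intro allI impI)
    fix a b
    assume h: "\<bar>2 * a - int (Suc d) * (int r - 1)\<bar> \<le> \<bar>2 * b - int (Suc d) * (int r - 1)\<bar>"
    define a' where "a' = (if 2 * a \<le> D then a else D - a)"
    define b' where "b' = (if 2 * b \<le> D then b else D - b)"
    have pa: "PP r (Suc d) a = PP r (Suc d) a'" unfolding a'_def using sym by auto
    have pb: "PP r (Suc d) b = PP r (Suc d) b'" unfolding b'_def using sym by auto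
    have ea: "\<bar>2 * a - D\<bar> = D - 2 * a'" unfolding a'_def by auto
    have eb: "\<bar>2 * b - D\<bar> = D - 2 * b'" unfolding b'_def by auto
    have "b' \<le> a'" using h ea eb unfolding D_def by simp
    moreover have "2 * a' \<le> D" unfolding a'_def by auto
    ultimately have "PP r (Suc d) b' \<le> PP r (Suc d) a'" using mono2 by blast
    then show "PP r (Suc d) b \<le> PP r (Suc d) a" using pa pb by (simp only:)
  qed
qed

lemma UM_all: "r \<ge> 1 \<Longrightarrow> UM r d"
  by (induction d) (auto intro: UM_0 UM_Suc)

definition HH :: "nat \<Rightarrow> nat \<Rightarrow> int \<Rightarrow> int \<Rightarrow> int" where
  "HH r d k i = PP r d (i * int r - k) - PP r d ((i - 1) * int r - k)"

lemma HH_Suc: "HH r (Suc d) k i = (\<Sum>j<r. HH r d (k + int j) i)"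
  unfolding HH_def PP.simps sum_subtractf[symmetric]
  by (rule sum.cong[OF refl]) (simp add: algebra_simps)

lemma HH_m1: "r \<ge> 1 \<Longrightarrow> k \<ge> 0 \<Longrightarrow> HH r d k (-1) = 0"
  unfolding HH_def by (simp add: PP_neg)

lemma HH_00: "r \<ge> 1 \<Longrightarrow> HH r d 0 0 = 1"
  unfolding HH_def by (simp add: PP_neg PP_zero)

lemma HH_k0: "r \<ge> 1 \<Longrightarrow> k \<ge> 1 \<Longrightarrow> HH r d k 0 = 0"
  unfolding HH_def by (simp add: PP_neg)

lemma HH_U3:
  assumes r: "r \<ge> 1" and d: "d = 2 * m + 1" and j: "0 \<le> j" "j \<le> int r"
  shows "HH r d j (int m + 2) \<le> 0"
proof -
  have "\<bar>2 * ((int m + 1) * int r - j) - int d * (int r - 1)\<bar> \<le> \<bar>2 * ((int m + 2) * int r - j) - int d * (int r - 1)\<bar>"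
  proof -
    have e1: "2 * ((int m + 1) * int r - j) - int d * (int r - 1) = int r + 2 * int m + 1 - 2 * j" using d by (simp add: algebra_simps)
    have e2: "2 * ((int m + 2) * int r - j) - int d * (int r - 1) = 3 * int r + 2 * int m + 1 - 2 * j" using d by (simp add: algebra_simps)
    have "int m \<ge> 0" by simp
    show ?thesis unfolding e1 e2 using j by arith
  qed
  then have "PP r d ((int m + 2) * int r - j) \<le> PP r d ((int m + 1) * int r - j)"
    using UM_all[OF r, of d] unfolding UM_def by blast
  moreover have "(int m + 2 - 1) = 1 + int m" by simp
  ultimately show ?thesis unfolding HH_def by (simp add: add.commute)
qed

lemma HH_shift: "HH r d (k + int r) i = HH r d k (i - 1)"
  unfolding HH_def by (simp add: algebra_simps)

lemma HH_split:
  assumes "k \<le> r"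
  shows "(\<Sum>j<r. HH r d (int k + int j) i)
       = (\<Sum>j\<in>{k..<r}. HH r d (int j) i) + (\<Sum>j<k. HH r d (int j) (i - 1))"
proof -
  have "(\<Sum>j<r. HH r d (int k + int j) i) = (\<Sum>j\<in>{0+k..<r+k}. HH r d (int j) i)"
    by (subst sum.shift_bounds_nat_ivl) (simp add: lessThan_atLeast0 add.commute)
  also have "\<dots> = (\<Sum>j\<in>{k..<r}. HH r d (int j) i) + (\<Sum>j\<in>{r..<r+k}. HH r d (int j) i)"
    using assms by (simp add: sum.atLeastLessThan_concat)
  also have "(\<Sum>j\<in>{r..<r+k}. HH r d (int j) i) = (\<Sum>j\<in>{0+r..<k+r}. HH r d (int j) i)"
    by (simp add: add.commute)
  also have "\<dots> = (\<Sum>j<k. HH r d (int j + int r) i)"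
    by (subst sum.shift_bounds_nat_ivl) (simp add: lessThan_atLeast0)
  also have "\<dots> = (\<Sum>j<k. HH r d (int j) (i - 1))"
    by (simp add: HH_shift)
  finally show ?thesis .
qed

lemma HH_Suc_split:
  assumes "k \<le> r"
  shows "HH r (Suc d) (int k) i
       = (\<Sum>j\<in>{k..<r}. HH r d (int j) i) + (\<Sum>j<k. HH r d (int j) (i - 1))"
  using HH_split[OF assms] by (simp add: HH_Suc)

lemma HH_pair:
  assumes r: "r \<ge> 1" and d: "d = 2 * m + 1"
  shows "HH r d j (int m + 1) + HH r d (int d - j) (int m + 1) = 0"
proof -
  have s1: "PP r d (int m * int r - j) = PP r d ((int m + 1) * int r - (int d - j))"
    using PP_sym[OF r, of d "int m * int r - j"] d by (simp add: algebra_simps)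
  have s2: "PP r d (int m * int r - (int d - j)) = PP r d ((int m + 1) * int r - j)"
    using PP_sym[OF r, of d "int m * int r - (int d - j)"] d by (simp add: algebra_simps)
  show ?thesis unfolding HH_def using s1 s2 by simp
qed

lemma HH_U1:
  assumes r: "r \<ge> 1" and d: "d = 2 * m" and j: "0 \<le> j" "2 * j \<le> int r + int d"
  shows "HH r d j (int m + 1) \<le> 0"
proof -
  have "\<bar>2 * (int m * int r - j) - int d * (int r - 1)\<bar> \<le> \<bar>2 * ((int m + 1) * int r - j) - int d * (int r - 1)\<bar>"
  proof -
    have e1: "2 * (int m * int r - j) - int d * (int r - 1) = 2 * int m - 2 * j" using d by (simp add: algebra_simps)
    have e2: "2 * ((int m + 1) * int r - j) - int d * (int r - 1) = 2 * int r + 2 * int m - 2 * j" using d by (simp add: algebra_simps)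
    have "int m \<ge> 0" "int d = 2 * int m" using d by simp_all
    then show ?thesis unfolding e1 e2 using j by arith
  qed
  then have "PP r d ((int m + 1) * int r - j) \<le> PP r d (int m * int r - j)"
    using UM_all[OF r, of d] unfolding UM_def by blast
  then show ?thesis unfolding HH_def by simp
qed

lemma HH_U2:
  assumes r: "r \<ge> 1" and d: "d = 2 * m + 1" and k: "2 * k \<ge> 2 * int m + 1"
  shows "HH r d k (int m + 1) \<ge> 0"
proof -
  have "\<bar>2 * ((int m + 1) * int r - k) - int d * (int r - 1)\<bar> \<le> \<bar>2 * (int m * int r - k) - int d * (int r - 1)\<bar>"
  proof -
    have e1: "2 * ((int m + 1) * int r - k) - int d * (int r - 1) = int r - 2 * k + 2 * int m + 1" using d by (simp add: algebra_simps)
    have e2: "2 * (int m * int r - k) - int d * (int r - 1) = - int r - 2 * k + 2 * int m + 1" using d by (simp add: algebra_simps)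
    show ?thesis unfolding e1 e2 using k by arith
  qed
  then have "PP r d (int m * int r - k) \<le> PP r d ((int m + 1) * int r - k)"
    using UM_all[OF r, of d] unfolding UM_def by blast
  then show ?thesis unfolding HH_def by simp
qed

definition cplx :: "nat set set \<Rightarrow> bool" where
  "cplx \<Delta> \<longleftrightarrow> finite \<Delta> \<and> (\<forall>F\<in>\<Delta>. finite F) \<and> (\<forall>F\<in>\<Delta>. \<forall>G. G \<subseteq> F \<longrightarrow> G \<in> \<Delta>)"

definition fc :: "nat set set \<Rightarrow> nat \<Rightarrow> int" where
  "fc \<Delta> i = int (card {F\<in>\<Delta>. card F = i})"

definition pc :: "nat set set \<Rightarrow> nat \<Rightarrow> int" where
  "pc L i = (if i = 0 then 0 else fc L (i - 1))"

definition SL :: "nat set set list \<Rightarrow> nat \<Rightarrow> int" where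
  "SL Ls i = (\<Sum>L\<leftarrow>Ls. pc L i)"

lemma fc_nonneg: "fc \<Delta> i \<ge> 0" unfolding fc_def by simp
lemma pc_nonneg: "pc L i \<ge> 0" unfolding pc_def using fc_nonneg by simp
lemma SL_nonneg: "SL Ls i \<ge> 0" unfolding SL_def using pc_nonneg by (induction Ls) (auto intro: add_nonneg_nonneg)

lemma SL_Nil[simp]: "SL [] i = 0" unfolding SL_def by simp
lemma SL_Cons[simp]: "SL (L # Ls) i = pc L i + SL Ls i" unfolding SL_def by simp
lemma SL_append[simp]: "SL (Ls @ Ms) i = SL Ls i + SL Ms i" unfolding SL_def by simp
lemma SL_concat: "SL (concat Lss) i = (\<Sum>Ls\<leftarrow>Lss. SL Ls i)"
  by (induction Lss) auto

lemma fc_mono: "cplx \<Delta> \<Longrightarrow> L \<subseteq> \<Delta> \<Longrightarrow> fc L i \<le> fc \<Delta> i"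
  unfolding fc_def cplx_def by (auto intro!: card_mono)

lemma fc_zero_bound:
  assumes "cplx L" "\<forall>i\<ge>s. fc L i = 0"
  shows "\<forall>G\<in>L. card G < s"
proof
  fix G assume G: "G \<in> L"
  show "card G < s"
  proof (rule ccontr)
    assume "\<not> card G < s"
    then have "fc L (card G) = 0" using assms by auto
    moreover have "finite {F\<in>L. card F = card G}" using assms unfolding cplx_def by auto
    ultimately show False using G unfolding fc_def by auto
  qed
qed

lemma fc_bound_zero:
  assumes "\<forall>G\<in>L. card G < s" "i \<ge> s"
  shows "fc L i = 0"
proof -
  have "{F\<in>L. card F = i} = {}" using assms by fastforce
  then have "card {F\<in>L. card F = i} = 0" by (simp only: card.empty)
  then show ?thesis unfolding fc_def by simp
qed

lemma fc_empty:
  assumes "cplx L" "fc L 0 = 1"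
  shows "{} \<in> L" "{F\<in>L. card F = 0} = {{}}"
proof -
  have fin: "\<forall>F\<in>L. finite F" using assms unfolding cplx_def by auto
  have sub: "\<forall>F\<in>L. card F = 0 \<longrightarrow> F = {}" using fin by (simp add: card_eq_0_iff)
  have ne: "{F\<in>L. card F = 0} \<noteq> {}"
  proof
    assume "{F\<in>L. card F = 0} = {}"
    then have "card {F\<in>L. card F = 0} = 0" by (simp only: card.empty)
    then have "fc L 0 = 0" unfolding fc_def by simp
    with assms(2) show False by simp
  qed
  then obtain F where "F \<in> L" "card F = 0" by blast
  then show e: "{} \<in> L" using sub by blast
  show "{F\<in>L. card F = 0} = {{}}" using sub e by auto
qed

lemma cone:
  assumes "cplx \<Phi>" "cplx L" "L \<subseteq> \<Phi>"
  shows "\<exists>\<Phi>'. cplx \<Phi>' \<and> \<Phi> \<subseteq> \<Phi>' \<and> (\<forall>i. fc \<Phi>' i = fc \<Phi> i + pc L i)"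
proof -
  have finU: "finite (\<Union>\<Phi>)" using assms(1) unfolding cplx_def by auto
  obtain v :: nat where v: "v \<notin> \<Union>\<Phi>" using finU infinite_UNIV_nat ex_new_if_finite by blast
  define \<Phi>' where "\<Phi>' = \<Phi> \<union> (insert v) ` L"
  have vL: "\<forall>G\<in>L. v \<notin> G" using v assms(3) by auto
  have finL: "\<forall>G\<in>L. finite G" "finite L" using assms(2) unfolding cplx_def by auto
  have c: "cplx \<Phi>'"
    unfolding cplx_def
  proof (intro conjI ballI allI impI)
    show "finite \<Phi>'" unfolding \<Phi>'_def using assms unfolding cplx_def by auto
  next
    fix F assume "F \<in> \<Phi>'" then show "finite F" unfolding \<Phi>'_def using assms unfolding cplx_def by auto
  next
    fix F G assume F: "F \<in> \<Phi>'" and G: "G \<subseteq> F"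
    show "G \<in> \<Phi>'"
    proof (cases "F \<in> \<Phi>")
      case True then show ?thesis using G assms(1) unfolding cplx_def \<Phi>'_def by auto
    next
      case False
      then obtain H where H: "H \<in> L" "F = insert v H" using F unfolding \<Phi>'_def by auto
      show ?thesis
      proof (cases "v \<in> G")
        case True
        then have "G = insert v (G - {v})" by auto
        moreover have "G - {v} \<in> L" using H G assms(2) unfolding cplx_def by blast
        ultimately show ?thesis unfolding \<Phi>'_def by blast
      next
        case False
        then have "G \<subseteq> H" using H G by auto
        then have "G \<in> L" using H assms(2) unfolding cplx_def by blast
        then show ?thesis using assms(3) unfolding \<Phi>'_def by auto
      qed
    qed
  qed
  have cnt: "fc \<Phi>' i = fc \<Phi> i + pc L i" for i
  proof -
    have eq: "{F\<in>\<Phi>'. card F = i} = {F\<in>\<Phi>. card F = i} \<union> (insert v) ` {G\<in>L. Suc (card G) = i}"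
      unfolding \<Phi>'_def using vL finL by (auto simp: card_insert_if)
    have disj: "{F\<in>\<Phi>. card F = i} \<inter> (insert v) ` {G\<in>L. Suc (card G) = i} = {}"
      using v by auto
    have inj: "inj_on (insert v) {G\<in>L. Suc (card G) = i}"
      unfolding inj_on_def using vL by (metis insert_ident mem_Collect_eq)
    have f1: "finite {F\<in>\<Phi>. card F = i}" using assms(1) unfolding cplx_def by auto
    have f2: "finite {G\<in>L. Suc (card G) = i}" using finL by auto
    have "card {F\<in>\<Phi>'. card F = i} = card {F\<in>\<Phi>. card F = i} + card {G\<in>L. Suc (card G) = i}"
      unfolding eq using disj f1 f2 inj by (simp add: card_Un_disjoint card_image)
    moreover have "int (card {G\<in>L. Suc (card G) = i}) = pc L i"
      unfolding pc_def fc_def by (cases i) auto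
    ultimately show ?thesis unfolding fc_def by simp
  qed
  show ?thesis using c cnt unfolding \<Phi>'_def by blast
qed

lemma build:
  assumes "cplx \<Delta>" "\<forall>L\<in>set Ls. cplx L \<and> L \<subseteq> \<Delta>"
  shows "\<exists>\<Delta>'. cplx \<Delta>' \<and> \<Delta> \<subseteq> \<Delta>' \<and> (\<forall>i. fc \<Delta>' i = fc \<Delta> i + SL Ls i) \<and>
           (\<forall>p \<le> length Ls. \<exists>\<Phi>. cplx \<Phi> \<and> \<Delta> \<subseteq> \<Phi> \<and> \<Phi> \<subseteq> \<Delta>' \<and> (\<forall>i. fc \<Phi> i = fc \<Delta> i + SL (take p Ls) i))"
  using assms(2)
proof (induction Ls rule: rev_induct)
  case Nil
  then show ?case using assms(1) by auto
next
  case (snoc L Ls)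
  then obtain \<Delta>'' where D: "cplx \<Delta>''" "\<Delta> \<subseteq> \<Delta>''" "\<forall>i. fc \<Delta>'' i = fc \<Delta> i + SL Ls i"
     "\<forall>p \<le> length Ls. \<exists>\<Phi>. cplx \<Phi> \<and> \<Delta> \<subseteq> \<Phi> \<and> \<Phi> \<subseteq> \<Delta>'' \<and> (\<forall>i. fc \<Phi> i = fc \<Delta> i + SL (take p Ls) i)"
    by auto
  have L: "cplx L" "L \<subseteq> \<Delta>''" using snoc.prems D(2) by auto
  obtain \<Delta>' where D': "cplx \<Delta>'" "\<Delta>'' \<subseteq> \<Delta>'" "\<forall>i. fc \<Delta>' i = fc \<Delta>'' i + pc L i"
    using cone[OF D(1) L] by blast
  have A: "\<forall>i. fc \<Delta>' i = fc \<Delta> i + SL (Ls @ [L]) i" using D(3) D'(3) by simp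
  have B: "\<exists>\<Phi>. cplx \<Phi> \<and> \<Delta> \<subseteq> \<Phi> \<and> \<Phi> \<subseteq> \<Delta>' \<and> (\<forall>i. fc \<Phi> i = fc \<Delta> i + SL (take p (Ls @ [L])) i)"
    if p: "p \<le> length (Ls @ [L])" for p
  proof (cases "p \<le> length Ls")
    case True
    then obtain \<Phi> where "cplx \<Phi> \<and> \<Delta> \<subseteq> \<Phi> \<and> \<Phi> \<subseteq> \<Delta>'' \<and> (\<forall>i. fc \<Phi> i = fc \<Delta> i + SL (take p Ls) i)"
      using D(4) by blast
    then show ?thesis using True D'(2) by (intro exI[of _ \<Phi>]) auto
  next
    case False
    then have "p = length (Ls @ [L])" using p by simp
    then show ?thesis using A D'(1) D'(2) D(2) by (intro exI[of _ \<Delta>']) auto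
  qed
  show ?case using A B D'(1) D'(2) D(2) by blast
qed

lemma trunc:
  assumes "cplx \<Phi>" "0 \<le> t" "t \<le> fc \<Phi> s"
  shows "\<exists>L. cplx L \<and> L \<subseteq> \<Phi> \<and> (\<forall>i. fc L i = (if i < s then fc \<Phi> i else if i = s then t else 0))"
proof -
  have fin: "finite {F\<in>\<Phi>. card F = s}" using assms(1) unfolding cplx_def by auto
  have "nat t \<le> card {F\<in>\<Phi>. card F = s}" using assms unfolding fc_def by simp
  then obtain X where X: "X \<subseteq> {F\<in>\<Phi>. card F = s}" "card X = nat t"
    by (meson obtain_subset_with_card_n)
  define L where "L = {F\<in>\<Phi>. card F < s} \<union> X"
  have finF: "\<forall>F\<in>\<Phi>. finite F" using assms(1) unfolding cplx_def by auto
  have "cplx L" unfolding cplx_def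
  proof (intro conjI ballI allI impI)
    show "finite L" unfolding L_def using assms(1) X fin unfolding cplx_def by (auto intro: finite_subset)
  next
    fix F assume "F \<in> L" then show "finite F" unfolding L_def using X finF by auto
  next
    fix F G assume F: "F \<in> L" and G: "G \<subseteq> F"
    have FP: "F \<in> \<Phi>" "card F \<le> s" using F X unfolding L_def by auto
    have "G \<in> \<Phi>" using FP G assms(1) unfolding cplx_def by blast
    show "G \<in> L"
    proof (cases "G = F")
      case True then show ?thesis using F by simp
    next
      case False
      then have "card G < card F" using G FP finF by (meson psubsetI psubset_card_mono)
      then show ?thesis using FP \<open>G \<in> \<Phi>\<close> unfolding L_def by auto
    qed
  qed
  moreover have "L \<subseteq> \<Phi>" unfolding L_def using X by auto
  moreover have "fc L i = (if i < s then fc \<Phi> i else if i = s then t else 0)" for i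
  proof -
    consider "i < s" | "i = s" | "i > s" by linarith
    then show ?thesis
    proof cases
      case 1
      then have "{F\<in>L. card F = i} = {F\<in>\<Phi>. card F = i}" unfolding L_def using X by auto
      then show ?thesis unfolding fc_def using 1 by simp
    next
      case 2
      then have "{F\<in>L. card F = i} = X" unfolding L_def using X by auto
      then show ?thesis unfolding fc_def using 2 X assms(2) by simp
    next
      case 3
      then have "{F\<in>L. card F = i} = {}" unfolding L_def using X by auto
      then have "card {F\<in>L. card F = i} = 0" by (simp only: card.empty)
      then show ?thesis unfolding fc_def using 3 by simp
    qed
  qed
  ultimately show ?thesis by blast
qed

lemma vadd_map: "vadd (map f [0..<n]) (map g [0..<n]) = map (\<lambda>i. f i + g i) [0..<n]"
  by (simp add: vadd_def list_eq_iff_nth_eq)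

lemma vsum_map: "vsum n (map (\<lambda>L. map (pc L) [0..<n]) Ls) = map (SL Ls) [0..<n]"
proof (induction Ls)
  case Nil
  then show ?case by (simp add: vsum_def list_eq_iff_nth_eq)
next
  case (Cons L Ls)
  then show ?case by (simp add: vsum_def vadd_map)
qed

lemma fvec_of:
  assumes "cplx L" "fc L 0 = 1" "\<forall>i\<ge>N. fc L i = 0" "N \<ge> 1"
  shows "is_fvector (map (fc L) [0..<N])"
proof -
  have b: "\<forall>G\<in>L. card G < N" using fc_zero_bound[OF assms(1) assms(3)] .
  have h: "hd (map (fc L) [0..<N]) = 1" using assms(2,4) by (simp add: hd_map hd_upt)
  show ?thesis unfolding is_fvector_def
    apply (intro conjI)
    subgoal using assms(4) by simp
    subgoal using h .
    apply (rule exI[of _ L])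
    using assms(1) b unfolding cplx_def fc_def by auto
qed

lemma R1:
  assumes D: "cplx \<Delta>" and n: "n \<ge> 2"
    and Ls: "\<forall>L\<in>set Ls. cplx L \<and> fc L 0 = 1 \<and> L \<subseteq> \<Delta> \<and> (\<forall>i\<ge>n - 1. fc L i = 0)"
  shows "admissible (map (fc \<Delta>) [0..<n]) (map (SL Ls) [0..<n])"
  unfolding admissible_def
proof (intro exI[of _ "map (\<lambda>L. map (pc L) [0..<n]) Ls"] conjI allI impI)
  show "map (SL Ls) [0..<n] = vsum (length (map (fc \<Delta>) [0..<n])) (map (\<lambda>L. map (pc L) [0..<n]) Ls)"
    by (simp add: vsum_map)
next
  fix j assume j: "j < length (map (\<lambda>L. map (pc L) [0..<n]) Ls)"
  define L where "L = Ls ! j"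
  have Lp: "cplx L" "fc L 0 = 1" "L \<subseteq> \<Delta>" "\<forall>i\<ge>n - 1. fc L i = 0"
    using Ls j unfolding L_def by auto
  have e1: "vadd (map (fc \<Delta>) [0..<n]) (vsum (length (map (fc \<Delta>) [0..<n])) (take j (map (\<lambda>L. map (pc L) [0..<n]) Ls)))
      = map (\<lambda>i. fc \<Delta> i + SL (take j Ls) i) [0..<n]"
    by (simp add: take_map vsum_map vadd_map)
  have e2: "map (\<lambda>L. map (pc L) [0..<n]) Ls ! j = map (pc L) [0..<n]" using j unfolding L_def by simp
  have dr: "drop 1 (map (pc L) [0..<n]) = map (fc L) [0..<n - 1]"
    by (simp add: list_eq_iff_nth_eq pc_def)
  have fv: "is_fvector (map (fc L) [0..<n - 1])"
    by (rule fvec_of) (use Lp n in auto)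
  show "basic_admissible (vadd (map (fc \<Delta>) [0..<n]) (vsum (length (map (fc \<Delta>) [0..<n])) (take j (map (\<lambda>L. map (pc L) [0..<n]) Ls))))
          (map (\<lambda>L. map (pc L) [0..<n]) Ls ! j)"
    unfolding e1 e2 basic_admissible_def
  proof (intro conjI allI impI)
    show "length (map (pc L) [0..<n]) = length (map (\<lambda>i. fc \<Delta> i + SL (take j Ls) i) [0..<n])" by simp
    show "2 \<le> length (map (\<lambda>i. fc \<Delta> i + SL (take j Ls) i) [0..<n])" using n by simp
    show "map (pc L) [0..<n] ! 0 = 0" using n by (simp add: pc_def)
    show "map (pc L) [0..<n] ! 1 = 1" using n Lp by (simp add: pc_def)
    show "is_fvector (drop 1 (map (pc L) [0..<n]))" using dr fv by simp
  next
    fix i assume i: "2 \<le> i \<and> i < length (map (\<lambda>i. fc \<Delta> i + SL (take j Ls) i) [0..<n])"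
    have "pc L i = fc L (i - 1)" using i by (simp add: pc_def)
    also have "\<dots> \<le> fc \<Delta> (i - 1)" using fc_mono[OF D Lp(3)] .
    also have "\<dots> \<le> fc \<Delta> (i - 1) + SL (take j Ls) (i - 1)" using SL_nonneg by simp
    finally have "pc L i \<le> fc \<Delta> (i - 1) + SL (take j Ls) (i - 1)" .
    moreover have "i - 1 < n" "i < n" using i by auto
    ultimately show "map (pc L) [0..<n] ! i \<le> map (\<lambda>i. fc \<Delta> i + SL (take j Ls) i) [0..<n] ! (i - 1)"
      by (simp only: nth_map_upt) simp
  qed
qed

definition hh :: "nat \<Rightarrow> nat \<Rightarrow> nat \<Rightarrow> nat \<Rightarrow> int" where
  "hh r d k i = HH r d (int k) (int i)"

definition lk :: "nat set set \<Rightarrow> nat \<Rightarrow> nat set set list \<Rightarrow> bool" where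
  "lk \<Delta> s Ls \<longleftrightarrow> (\<forall>L\<in>set Ls. cplx L \<and> fc L 0 = 1 \<and> L \<subseteq> \<Delta> \<and> (\<forall>i\<ge>s. fc L i = 0))"

lemma lk_mono: "lk \<Delta> s Ls \<Longrightarrow> \<Delta> \<subseteq> \<Delta>' \<Longrightarrow> s \<le> s' \<Longrightarrow> lk \<Delta>' s' Ls"
  unfolding lk_def by auto

lemma lk_Cons: "lk \<Delta> s (L # Ls) \<longleftrightarrow> (cplx L \<and> fc L 0 = 1 \<and> L \<subseteq> \<Delta> \<and> (\<forall>i\<ge>s. fc L i = 0)) \<and> lk \<Delta> s Ls"
  unfolding lk_def by auto

lemma lk_concat: "(\<forall>j\<in>set js. lk \<Delta> s (C j)) \<Longrightarrow> lk \<Delta> s (concat (map C js))"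
  unfolding lk_def by auto

lemma SL_lk_zero: "lk \<Delta> s Ls \<Longrightarrow> i \<ge> s + 1 \<Longrightarrow> SL Ls i = 0"
  unfolding lk_def SL_def pc_def by (induction Ls) auto

lemma SL_zero0: "SL Ls 0 = 0"
  unfolding SL_def pc_def by (induction Ls) auto

lemma SL_concat_upt: "SL (concat (map C [a..<b])) i = (\<Sum>j\<in>{a..<b}. SL (C j) i)"
  by (simp add: SL_concat sum_set_upt_conv_sum_list_nat[symmetric] o_def)

lemma hh_split:
  assumes "k \<le> r" and r: "r \<ge> 1"
  shows "hh r (Suc d) k i = (\<Sum>j\<in>{k..<r}. hh r d j i) + (if i = 0 then 0 else (\<Sum>j<k. hh r d j (i - 1)))"
proof -
  have "hh r (Suc d) k i = (\<Sum>j\<in>{k..<r}. HH r d (int j) (int i)) + (\<Sum>j<k. HH r d (int j) (int i - 1))"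
    unfolding hh_def by (rule HH_Suc_split[OF assms(1)])
  moreover have "(\<Sum>j<k. HH r d (int j) (int i - 1)) = (if i = 0 then 0 else (\<Sum>j<k. hh r d j (i - 1)))"
    using r by (cases i) (auto simp: hh_def HH_m1)
  ultimately show ?thesis by (simp add: hh_def)
qed


lemma hh_00: "r \<ge> 1 \<Longrightarrow> hh r d 0 0 = 1"
  unfolding hh_def using HH_00 by simp

lemma hh_k0: "r \<ge> 1 \<Longrightarrow> k \<ge> 1 \<Longrightarrow> hh r d k 0 = 0"
  unfolding hh_def using HH_k0 by simp

lemma hh_pair:
  assumes r: "r \<ge> 1" and d: "d = 2 * m + 1"
  shows "(\<Sum>j\<in>{a..d - a}. hh r d j (m + 1)) = 0"
proof (cases "a \<le> d - a")
  case True
  define f where "f j = hh r d j (m + 1)" for j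
  have p: "f j + f (d - j) = 0" if "j \<le> d" for j
    using HH_pair[OF r d, of "int j"] that unfolding f_def hh_def by (simp add: of_nat_diff add.commute)
  have "(\<Sum>j\<in>{a..d - a}. f j) = (\<Sum>j\<in>{a..d - a}. f (d - a + a - j))"
    by (rule sum.atLeastAtMost_rev)
  also have "\<dots> = (\<Sum>j\<in>{a..d - a}. f (d - j))" using True by simp
  finally have "2 * (\<Sum>j\<in>{a..d - a}. f j) = (\<Sum>j\<in>{a..d - a}. f j + f (d - j))"
    by (simp add: sum.distrib)
  also have "\<dots> = 0" by (rule sum.neutral) (use p in auto)
  finally show ?thesis unfolding f_def by simp
next
  case False
  then show ?thesis by simp
qed

lemma distrib:
  fixes c :: "nat \<Rightarrow> int"
  assumes "finite J" "\<forall>j\<in>J. 0 \<le> c j" "0 \<le> R" "R \<le> (\<Sum>j\<in>J. c j)"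
  shows "\<exists>t. (\<forall>j\<in>J. 0 \<le> t j \<and> t j \<le> c j) \<and> (\<Sum>j\<in>J. t j) = R"
  using assms
proof (induction J arbitrary: R rule: finite_induct)
  case empty
  then show ?case by auto
next
  case (insert x J)
  define R1 where "R1 = min R (\<Sum>j\<in>J. c j)"
  have "0 \<le> (\<Sum>j\<in>J. c j)" using insert.prems by (auto intro: sum_nonneg)
  then have "0 \<le> R1" "R1 \<le> (\<Sum>j\<in>J. c j)" unfolding R1_def using insert.prems by auto
  then obtain t where t: "\<forall>j\<in>J. 0 \<le> t j \<and> t j \<le> c j" "(\<Sum>j\<in>J. t j) = R1"
    using insert.IH insert.prems by auto
  define t' where "t' = t(x := R - R1)"
  have s: "(\<Sum>j\<in>J. t' j) = R1" using t insert.hyps unfolding t'_def by (metis sum.cong fun_upd_other)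
  have "0 \<le> R - R1" "R - R1 \<le> c x" using insert.prems insert.hyps unfolding R1_def by auto
  then have "\<forall>j\<in>insert x J. 0 \<le> t' j \<and> t' j \<le> c j" using t insert.hyps unfolding t'_def by auto
  moreover have "(\<Sum>j\<in>insert x J. t' j) = R" using s insert.hyps unfolding t'_def by simp
  ultimately show ?case by blast
qed

lemma chain:
  fixes r :: nat
  assumes D: "cplx \<Delta>" and B: "\<forall>j\<in>{1..<r}. \<forall>L\<in>set (B j). cplx L \<and> L \<subseteq> \<Delta>"
  shows "\<exists>\<Delta>'. cplx \<Delta>' \<and> \<Delta> \<subseteq> \<Delta>' \<and> (\<forall>i. fc \<Delta>' i = fc \<Delta> i + (\<Sum>j\<in>{1..<r}. SL (B j) i)) \<and>
     (\<forall>k. 1 \<le> k \<and> k \<le> r \<longrightarrow> (\<exists>\<Phi>. cplx \<Phi> \<and> \<Delta> \<subseteq> \<Phi> \<and> \<Phi> \<subseteq> \<Delta>' \<and> (\<forall>i. fc \<Phi> i = fc \<Delta> i + (\<Sum>j\<in>{1..<k}. SL (B j) i))))"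
proof -
  define Ls where "Ls = concat (map B [1..<r])"
  have "\<forall>L\<in>set Ls. cplx L \<and> L \<subseteq> \<Delta>" using B unfolding Ls_def by auto
  from build[OF D this] obtain \<Delta>' where "cplx \<Delta>' \<and> \<Delta> \<subseteq> \<Delta>' \<and> (\<forall>i. fc \<Delta>' i = fc \<Delta> i + SL Ls i) \<and>
     (\<forall>p \<le> length Ls. \<exists>\<Phi>. cplx \<Phi> \<and> \<Delta> \<subseteq> \<Phi> \<and> \<Phi> \<subseteq> \<Delta>' \<and> (\<forall>i. fc \<Phi> i = fc \<Delta> i + SL (take p Ls) i))"
    by (rule exE)
  then have D': "cplx \<Delta>'" "\<Delta> \<subseteq> \<Delta>'" "\<forall>i. fc \<Delta>' i = fc \<Delta> i + SL Ls i"
     "\<forall>p \<le> length Ls. \<exists>\<Phi>. cplx \<Phi> \<and> \<Delta> \<subseteq> \<Phi> \<and> \<Phi> \<subseteq> \<Delta>' \<and> (\<forall>i. fc \<Phi> i = fc \<Delta> i + SL (take p Ls) i)"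
    by auto
  have P: "\<exists>\<Phi>. cplx \<Phi> \<and> \<Delta> \<subseteq> \<Phi> \<and> \<Phi> \<subseteq> \<Delta>' \<and> (\<forall>i. fc \<Phi> i = fc \<Delta> i + (\<Sum>j\<in>{1..<k}. SL (B j) i))"
    if k: "1 \<le> k" "k \<le> r" for k
  proof -
    have u: "[1..<r] = [1..<k] @ [k..<r]" using k by (metis le_Suc_ex upt_add_eq_append)
    define p where "p = length (concat (map B [1..<k]))"
    have tk: "take p Ls = concat (map B [1..<k])" unfolding Ls_def p_def u by simp
    have "p \<le> length Ls" unfolding Ls_def p_def u by simp
    then obtain \<Phi> where "cplx \<Phi> \<and> \<Delta> \<subseteq> \<Phi> \<and> \<Phi> \<subseteq> \<Delta>' \<and> (\<forall>i. fc \<Phi> i = fc \<Delta> i + SL (take p Ls) i)"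
      using D'(4) by (meson exE)
    then show ?thesis unfolding tk SL_concat_upt by (intro exI[of _ \<Phi>]) simp
  qed
  have D3: "\<forall>i. fc \<Delta>' i = fc \<Delta> i + (\<Sum>j\<in>{1..<r}. SL (B j) i)" using D'(3) unfolding Ls_def SL_concat_upt .
  show ?thesis
    apply (rule exI[of _ \<Delta>'])
    using D'(1,2) D3 P by simp
qed

lemma skel:
  assumes "cplx \<Phi>"
  shows "\<exists>L. cplx L \<and> L \<subseteq> \<Phi> \<and> (\<forall>i. fc L i = (if i < s then fc \<Phi> i else 0))"
proof -
  obtain L where "cplx L \<and> L \<subseteq> \<Phi> \<and> (\<forall>i. fc L i = (if i < s then fc \<Phi> i else if i = s then 0 else 0))"
    using trunc[OF assms, of 0 s] fc_nonneg by auto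
  then show ?thesis by (intro exI[of _ L]) auto
qed


lemma sum_lt_split0: "1 \<le> (k::nat) \<Longrightarrow> (\<Sum>j<k. f j) = f 0 + (\<Sum>j\<in>{1..<k}. (f j :: int))"
proof -
  assume k: "1 \<le> k"
  have "(\<Sum>j<k. f j) = (\<Sum>j\<in>{0..<k}. f j)" by (simp only: lessThan_atLeast0)
  also have "\<dots> = f 0 + (\<Sum>j\<in>{Suc 0..<k}. f j)" using k by (simp add: sum.atLeast_Suc_lessThan)
  finally show ?thesis by simp
qed

lemma hh_col0: "r \<ge> 1 \<Longrightarrow> 1 \<le> k \<Longrightarrow> (\<Sum>j<k. hh r d j 0) = 1"
  using sum_lt_split0[of k "\<lambda>j. hh r d j 0"] by (simp add: hh_00 hh_k0)

lemma sum_skip: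
  fixes f :: "nat \<Rightarrow> int"
  assumes "Suc d \<le> k" "(\<Sum>j\<in>{0..d}. f j) = 0"
  shows "(\<Sum>j\<in>{1..<k}. if j \<le> d then 0 else f j) = (\<Sum>j<k. f j)"
proof -
  define g where "g j = (if j \<le> d then 0 else f j)" for j
  have e1: "(\<Sum>j\<in>{1..<k}. g j) = (\<Sum>j\<in>{1..<Suc d}. g j) + (\<Sum>j\<in>{Suc d..<k}. g j)"
    by (rule sum.atLeastLessThan_concat[symmetric]) (use assms(1) in auto)
  have e2: "(\<Sum>j\<in>{1..<Suc d}. g j) = 0" unfolding g_def by (rule sum.neutral) auto
  have e3: "(\<Sum>j\<in>{Suc d..<k}. g j) = (\<Sum>j\<in>{Suc d..<k}. f j)" unfolding g_def by (rule sum.cong) auto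
  have e4: "(\<Sum>j\<in>{0..<Suc d}. f j) = 0" using assms(2) by (simp add: atLeastLessThanSuc_atLeastAtMost)
  have e5: "(\<Sum>j\<in>{0..<k}. f j) = (\<Sum>j\<in>{0..<Suc d}. f j) + (\<Sum>j\<in>{Suc d..<k}. f j)"
    by (rule sum.atLeastLessThan_concat[symmetric]) (use assms(1) in auto)
  have "(\<Sum>j<k. f j) = (\<Sum>j\<in>{0..<k}. f j)" by (simp only: lessThan_atLeast0)
  then show ?thesis using e1 e2 e3 e4 e5 unfolding g_def by simp
qed

lemma sum_remove0:
  fixes f :: "nat \<Rightarrow> int"
  assumes "finite A" "K \<subseteq> A" "(\<Sum>j\<in>K. f j) = 0"
  shows "(\<Sum>j\<in>A. if j \<in> K then 0 else f j) = (\<Sum>j\<in>A. f j)"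
proof -
  have "(\<Sum>j\<in>A. f j) = (\<Sum>j\<in>A. (if j \<in> K then 0 else f j) + (if j \<in> K then f j else 0))"
    by (rule sum.cong) auto
  also have "\<dots> = (\<Sum>j\<in>A. if j \<in> K then 0 else f j) + (\<Sum>j\<in>A \<inter> K. f j)"
    using assms(1) by (simp add: sum.distrib sum.inter_restrict)
  also have "A \<inter> K = K" using assms by auto
  finally show ?thesis using assms by simp
qed

definition Q :: "nat \<Rightarrow> nat \<Rightarrow> bool" where
  "Q r d \<longleftrightarrow> (\<exists>\<Delta>. cplx \<Delta> \<and> (\<forall>i. fc \<Delta> i = (if i < d div 2 + 1 then hh r d 0 i else 0)) \<and>
    (\<forall>k. 1 \<le> k \<and> k < r \<longrightarrow> (\<exists>Ls. lk \<Delta> (d div 2) Ls \<and> (\<forall>i<d div 2 + 1. SL Ls i = hh r d k i))) \<and>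
    (odd d \<longrightarrow> (\<forall>k. d div 2 + 1 \<le> k \<and> k < r \<longrightarrow>
        (\<exists>Ls. lk \<Delta> (d div 2 + 1) Ls \<and> (\<forall>i<d div 2 + 2. SL Ls i = hh r d k i)))) \<and>
    (even d \<longrightarrow> (\<forall>k t. d \<le> k \<and> k < r \<and> 0 \<le> t \<and> t \<le> hh r d k (d div 2 + 1) \<longrightarrow>
        (\<exists>Ls. lk \<Delta> (d div 2 + 1) Ls \<and> (\<forall>i<d div 2 + 1. SL Ls i = hh r d k i) \<and> SL Ls (d div 2 + 1) = t))))"

lemma PP_1: "PP r (Suc 0) n = (if 0 \<le> n \<and> n < int r then 1 else 0)"
proof -
  have "PP r (Suc 0) n = (\<Sum>j<r. if n - int j = 0 then 1 else 0)" by (simp add: PP.simps)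
  also have "\<dots> = (\<Sum>j<r. if j = nat n \<and> 0 \<le> n then 1 else 0)"
    by (rule sum.cong) auto
  also have "\<dots> = (if 0 \<le> n \<and> n < int r then 1 else 0)"
    by (cases "0 \<le> n") (auto simp: sum.delta')
  finally show ?thesis .
qed

lemma fc_single: "fc {{}} i = (if i = 0 then 1 else 0)"
proof -
  show ?thesis
  proof (cases "i = 0")
    case True
    then have e: "{F\<in>{{}}. card F = i} = {{}}" by auto
    show ?thesis unfolding fc_def e using True by simp
  next
    case False
    then have e: "{F\<in>{{}}. card F = i} = {}" by auto
    show ?thesis unfolding fc_def e using False by simp
  qed
qed

lemma cplx_single: "cplx {{}}" unfolding cplx_def by auto

lemma Q_base: "r \<ge> 1 \<Longrightarrow> Q r 1"
proof -
  assume r: "r \<ge> 1"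
  have a: "\<forall>i. fc {{}} i = (if i < 1 div 2 + 1 then hh r 1 0 i else 0)"
    using hh_00[OF r] by (simp add: fc_single)
  have b: "\<forall>k. 1 \<le> k \<and> k < r \<longrightarrow> (\<exists>Ls. lk {{}} (1 div 2) Ls \<and> (\<forall>i<1 div 2 + 1. SL Ls i = hh r 1 k i))"
    using hh_k0[OF r] by (intro allI impI exI[of _ "[]"]) (auto simp: lk_def)
  have c: "\<forall>k. 1 div 2 + 1 \<le> k \<and> k < r \<longrightarrow> (\<exists>Ls. lk {{}} (1 div 2 + 1) Ls \<and> (\<forall>i<1 div 2 + 2. SL Ls i = hh r 1 k i))"
  proof (intro allI impI)
    fix k assume k: "1 div 2 + 1 \<le> k \<and> k < r"
    have l: "lk {{}} (1 div 2 + 1) [{{}}]" unfolding lk_def using cplx_single by (auto simp: fc_single)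
    have h1: "hh r 1 k 1 = 1" using k unfolding hh_def HH_def by (simp add: PP_1)
    have sl: "\<forall>i<1 div 2 + 2. SL [{{}}] i = hh r 1 k i"
    proof (intro allI impI)
      fix i :: nat assume "i < 1 div 2 + 2"
      then have "i = 0 \<or> i = 1" by auto
      then show "SL [{{}}] i = hh r 1 k i" using h1 hh_k0[OF r, of k 1] k by (auto simp: pc_def fc_single)
    qed
    show "\<exists>Ls. lk {{}} (1 div 2 + 1) Ls \<and> (\<forall>i<1 div 2 + 2. SL Ls i = hh r 1 k i)"
      using l sl by blast
  qed
  show ?thesis unfolding Q_def using a b c cplx_single by (intro exI[of _ "{{}}"]) auto
qed

lemma stepA:
  assumes r: "r \<ge> 1" and Q: "Q r d" and dm: "d = 2 * m" and m1: "m \<ge> 1" and dr: "d + 1 \<le> r"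
  shows "Q r (Suc d)"
proof -
  have ev: "even d" using dm by simp
  have mS: "Suc d div 2 = m" "d div 2 = m" using dm by simp_all
  from Q obtain \<Delta> where D: "cplx \<Delta>" "\<forall>i. fc \<Delta> i = (if i < m + 1 then hh r d 0 i else 0)" and
    Bex: "\<forall>k. 1 \<le> k \<and> k < r \<longrightarrow> (\<exists>Ls. lk \<Delta> m Ls \<and> (\<forall>i<m + 1. SL Ls i = hh r d k i))" and
    Cex: "\<forall>k t. d \<le> k \<and> k < r \<and> 0 \<le> t \<and> t \<le> hh r d k (m + 1) \<longrightarrow>
        (\<exists>Ls. lk \<Delta> (m + 1) Ls \<and> (\<forall>i<m + 1. SL Ls i = hh r d k i) \<and> SL Ls (m + 1) = t)"
    unfolding Q_def mS using ev by blast
  obtain B where B: "\<And>k. 1 \<le> k \<and> k < r \<Longrightarrow> lk \<Delta> m (B k) \<and> (\<forall>i<m + 1. SL (B k) i = hh r d k i)"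
    using Bex by metis
  obtain C where C: "\<And>k t. d \<le> k \<and> k < r \<and> 0 \<le> t \<and> t \<le> hh r d k (m + 1) \<Longrightarrow>
      lk \<Delta> (m + 1) (C k t) \<and> (\<forall>i<m + 1. SL (C k t) i = hh r d k i) \<and> SL (C k t) (m + 1) = t"
    using Cex by metis
  have Bc: "\<forall>j\<in>{1..<r}. \<forall>L\<in>set (B j). cplx L \<and> L \<subseteq> \<Delta>" using B unfolding lk_def by auto
  from chain[OF D(1) Bc] obtain \<Delta>' where "cplx \<Delta>' \<and> \<Delta> \<subseteq> \<Delta>' \<and> (\<forall>i. fc \<Delta>' i = fc \<Delta> i + (\<Sum>j\<in>{1..<r}. SL (B j) i)) \<and>
     (\<forall>k. 1 \<le> k \<and> k \<le> r \<longrightarrow> (\<exists>\<Phi>. cplx \<Phi> \<and> \<Delta> \<subseteq> \<Phi> \<and> \<Phi> \<subseteq> \<Delta>' \<and> (\<forall>i. fc \<Phi> i = fc \<Delta> i + (\<Sum>j\<in>{1..<k}. SL (B j) i))))"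
    by (rule exE)
  then have D': "cplx \<Delta>'" "\<Delta> \<subseteq> \<Delta>'" "\<forall>i. fc \<Delta>' i = fc \<Delta> i + (\<Sum>j\<in>{1..<r}. SL (B j) i)"
    and Ph: "\<And>k. 1 \<le> k \<Longrightarrow> k \<le> r \<Longrightarrow> (\<exists>\<Phi>. cplx \<Phi> \<and> \<Delta> \<subseteq> \<Phi> \<and> \<Phi> \<subseteq> \<Delta>' \<and> (\<forall>i. fc \<Phi> i = fc \<Delta> i + (\<Sum>j\<in>{1..<k}. SL (B j) i)))"
    by auto
  have SB: "(\<Sum>j\<in>{a..<b}. SL (B j) i) = (\<Sum>j\<in>{a..<b}. hh r d j i)" if "1 \<le> a" "b \<le> r" "i < m + 1" for a b i
    by (rule sum.cong[OF refl]) (use B that in auto)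
  have SBz: "(\<Sum>j\<in>{a..<b}. SL (B j) i) = 0" if "1 \<le> a" "b \<le> r" "i \<ge> m + 1" for a b i
  proof (rule sum.neutral, rule ballI)
    fix j assume "j \<in> {a..<b}"
    then have "lk \<Delta> m (B j)" using B that by auto
    then show "SL (B j) i = 0" using SL_lk_zero that by simp
  qed
  have PhF: "\<exists>\<Phi>. cplx \<Phi> \<and> \<Delta> \<subseteq> \<Phi> \<and> \<Phi> \<subseteq> \<Delta>' \<and> (\<forall>i. fc \<Phi> i = (if i < m + 1 then (\<Sum>j<k. hh r d j i) else 0))"
    if k: "1 \<le> k" "k \<le> r" for k
  proof -
    obtain \<Phi> where P: "cplx \<Phi>" "\<Delta> \<subseteq> \<Phi>" "\<Phi> \<subseteq> \<Delta>'" "\<forall>i. fc \<Phi> i = fc \<Delta> i + (\<Sum>j\<in>{1..<k}. SL (B j) i)"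
      using Ph[OF k] by blast
    have "fc \<Phi> i = (if i < m + 1 then (\<Sum>j<k. hh r d j i) else 0)" for i
    proof (cases "i < m + 1")
      case True
      then show ?thesis using P(4) D(2) SB[of 1 k i] k True sum_lt_split0[OF k(1), of "\<lambda>j. hh r d j i"] by simp
    next
      case False
      then show ?thesis using P(4) D(2) SBz[of 1 k i] k by simp
    qed
    then show ?thesis using P by blast
  qed
  have hsplit: "hh r (Suc d) k i = (\<Sum>j\<in>{k..<r}. hh r d j i) + (if i = 0 then 0 else (\<Sum>j<k. hh r d j (i - 1)))"
    if "k \<le> r" for k i using hh_split[OF that r] .
  have QA: "\<forall>i. fc \<Delta>' i = (if i < Suc d div 2 + 1 then hh r (Suc d) 0 i else 0)"
  proof
    fix i
    show "fc \<Delta>' i = (if i < Suc d div 2 + 1 then hh r (Suc d) 0 i else 0)"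
    proof (cases "i < m + 1")
      case True
      have "hh r (Suc d) 0 i = (\<Sum>j\<in>{0..<r}. hh r d j i)" using hsplit[of 0 i] by simp
      also have "\<dots> = hh r d 0 i + (\<Sum>j\<in>{1..<r}. hh r d j i)"
        using r by (simp add: sum.atLeast_Suc_lessThan)
      finally show ?thesis using D'(3) D(2) SB[of 1 r i] True r mS by simp
    next
      case False
      then show ?thesis using D'(3) D(2) SBz[of 1 r i] r mS by simp
    qed
  qed
  have QB: "\<exists>Ls. lk \<Delta>' m Ls \<and> (\<forall>i<m + 1. SL Ls i = hh r (Suc d) k i)" if k: "1 \<le> k" "k < r" for k
  proof -
    obtain \<Phi> where P: "cplx \<Phi>" "\<Delta> \<subseteq> \<Phi>" "\<Phi> \<subseteq> \<Delta>'" "\<forall>i. fc \<Phi> i = (if i < m + 1 then (\<Sum>j<k. hh r d j i) else 0)"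
      using PhF[of k] k by auto
    obtain L0 where L0: "cplx L0" "L0 \<subseteq> \<Phi>" "\<forall>i. fc L0 i = (if i < m then fc \<Phi> i else 0)"
      using skel[OF P(1)] by blast
    have f0: "fc L0 0 = 1" using L0(3) P(4) m1 hh_col0[OF r k(1)] by simp
    define Ls where "Ls = L0 # concat (map B [k..<r])"
    have "lk \<Delta>' m Ls" unfolding Ls_def lk_Cons
    proof (intro conjI)
      show "lk \<Delta>' m (concat (map B [k..<r]))"
      proof (rule lk_concat, rule ballI)
        fix j assume "j \<in> set [k..<r]"
        then have "lk \<Delta> m (B j)" using B k by auto
        then show "lk \<Delta>' m (B j)" using lk_mono D'(2) by blast
      qed
    qed (use L0 f0 P in auto)
    moreover have "SL Ls i = hh r (Suc d) k i" if i: "i < m + 1" for i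
    proof -
      have "SL Ls i = pc L0 i + (\<Sum>j\<in>{k..<r}. hh r d j i)"
        unfolding Ls_def using SB[of k r i] k i by (simp add: SL_concat_upt)
      also have "pc L0 i = (if i = 0 then 0 else (\<Sum>j<k. hh r d j (i - 1)))"
        using L0(3) P(4) i unfolding pc_def by auto
      finally show ?thesis using hsplit[of k i] k by simp
    qed
    ultimately show ?thesis by blast
  qed
  have QC: "\<exists>Ls. lk \<Delta>' (m + 1) Ls \<and> (\<forall>i<m + 2. SL Ls i = hh r (Suc d) k i)" if k: "m + 1 \<le> k" "k < r" for k
  proof -
    have k1: "1 \<le> k" using k by simp
    obtain \<Phi> where P: "cplx \<Phi>" "\<Delta> \<subseteq> \<Phi>" "\<Phi> \<subseteq> \<Delta>'" "\<forall>i. fc \<Phi> i = (if i < m + 1 then (\<Sum>j<k. hh r d j i) else 0)"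
      using PhF[of k] k by auto
    define F where "F = fc \<Phi> m"
    have F: "F = (\<Sum>j<k. hh r d j m)" "0 \<le> F" unfolding F_def using P(4) fc_nonneg[of \<Phi> m] by auto
    define J where "J = {j\<in>{k..<r}. d \<le> j \<and> 0 \<le> hh r d j (m + 1)}"
    have Jsub: "J \<subseteq> {k..<r}" "finite J" unfolding J_def by auto
    define N where "N = (\<Sum>j\<in>{k..<r} - J. hh r d j (m + 1))"
    define Pos where "Pos = (\<Sum>j\<in>J. hh r d j (m + 1))"
    have NP: "(\<Sum>j\<in>{k..<r}. hh r d j (m + 1)) = N + Pos"
      unfolding N_def Pos_def using Jsub by (simp add: sum.subset_diff)
    have Nle: "N \<le> 0" unfolding N_def
    proof (rule sum_nonpos)
      fix j assume j: "j \<in> {k..<r} - J"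
      show "hh r d j (m + 1) \<le> 0"
      proof (cases "d \<le> j")
        case True
        then show ?thesis using j unfolding J_def by auto
      next
        case False
        then have "2 * int j \<le> int r + int d" using dr by simp
        then show ?thesis using HH_U1[OF r dm, of "int j"] unfolding hh_def by (simp add: add.commute)
      qed
    qed
    have Pge: "0 \<le> Pos" unfolding Pos_def J_def by (rule sum_nonneg) auto
    define T where "T = hh r (Suc d) k (m + 1)"
    have T: "T = N + Pos + F" unfolding T_def using hsplit[of k "m + 1"] k NP F by simp
    have T0: "0 \<le> T" unfolding T_def hh_def
      using HH_U2[OF r, of "Suc d" m "int k"] dm k by (simp add: add.commute)
    define top0 where "top0 = max 0 (F + N)"
    define R where "R = T - top0"
    have t0: "0 \<le> top0" "top0 \<le> F" unfolding top0_def using F Nle by auto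
    have R0: "0 \<le> R" "R \<le> Pos" unfolding R_def top0_def using T T0 Nle Pge by auto
    obtain t where t: "\<forall>j\<in>J. 0 \<le> t j \<and> t j \<le> hh r d j (m + 1)" "(\<Sum>j\<in>J. t j) = R"
      using distrib[OF Jsub(2), of "\<lambda>j. hh r d j (m + 1)" R] R0 unfolding Pos_def J_def by auto
    obtain L0 where L0: "cplx L0" "L0 \<subseteq> \<Phi>" "\<forall>i. fc L0 i = (if i < m then fc \<Phi> i else if i = m then top0 else 0)"
      using trunc[OF P(1) t0(1)] t0(2) unfolding F_def by blast
    have f0: "fc L0 0 = 1" using L0(3) P(4) m1 hh_col0[OF r k1] by simp
    define E where "E j = (if j \<in> J then C j (t j) else B j)" for j
    have Ej: "lk \<Delta> (m + 1) (E j) \<and> (\<forall>i<m + 1. SL (E j) i = hh r d j i) \<and> SL (E j) (m + 1) = (if j \<in> J then t j else 0)"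
      if j: "j \<in> {k..<r}" for j
    proof (cases "j \<in> J")
      case True
      then have "d \<le> j \<and> j < r \<and> 0 \<le> t j \<and> t j \<le> hh r d j (m + 1)" using t j unfolding J_def by auto
      then show ?thesis using C[of j "t j"] True unfolding E_def by auto
    next
      case False
      have "1 \<le> j \<and> j < r" using j k1 by auto
      then have "lk \<Delta> m (B j) \<and> (\<forall>i<m + 1. SL (B j) i = hh r d j i)" using B by blast
      then show ?thesis using False SL_lk_zero[of \<Delta> m "B j" "m + 1"] lk_mono[of \<Delta> m "B j" \<Delta> "m + 1"]
        unfolding E_def by auto
    qed
    define Ls where "Ls = L0 # concat (map E [k..<r])"
    have "lk \<Delta>' (m + 1) Ls" unfolding Ls_def lk_Cons
    proof (intro conjI)
      show "lk \<Delta>' (m + 1) (concat (map E [k..<r]))"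
      proof (rule lk_concat, rule ballI)
        fix j assume "j \<in> set [k..<r]"
        then have "lk \<Delta> (m + 1) (E j)" using Ej by auto
        then show "lk \<Delta>' (m + 1) (E j)" using lk_mono D'(2) by blast
      qed
    qed (use L0 f0 P in auto)
    moreover have "SL Ls i = hh r (Suc d) k i" if i: "i < m + 2" for i
    proof (cases "i < m + 1")
      case True
      have "SL Ls i = pc L0 i + (\<Sum>j\<in>{k..<r}. hh r d j i)"
        unfolding Ls_def using Ej True by (simp add: SL_concat_upt)
      also have "pc L0 i = (if i = 0 then 0 else (\<Sum>j<k. hh r d j (i - 1)))"
        using L0(3) P(4) True unfolding pc_def by auto
      finally show ?thesis using hsplit[of k i] k by simp
    next
      case False
      then have im: "i = m + 1" using i by simp
      have "SL Ls i = pc L0 (m + 1) + (\<Sum>j\<in>{k..<r}. if j \<in> J then t j else 0)"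
        unfolding Ls_def im using Ej by (simp add: SL_concat_upt)
      also have "(\<Sum>j\<in>{k..<r}. if j \<in> J then t j else 0) = (\<Sum>j\<in>J. t j)"
        using Jsub by (simp add: sum.inter_restrict[symmetric] Int_absorb1)
      also have "pc L0 (m + 1) = top0" using L0(3) unfolding pc_def by simp
      finally show ?thesis using t(2) unfolding R_def T_def im by simp
    qed
    ultimately show ?thesis by blast
  qed
  show ?thesis unfolding Q_def mS
    using D'(1) QA QB QC mS dm by (intro exI[of _ \<Delta>']) auto
qed

lemma stepB:
  assumes r: "r \<ge> 1" and Q: "Q r d" and dm: "d = 2 * m + 1" and dr: "d + 1 \<le> r"
  shows "Q r (Suc d)"
proof -
  have od: "odd d" using dm by simp
  have mS: "Suc d div 2 = m + 1" "d div 2 = m" using dm by simp_all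
  from Q obtain \<Delta> where D: "cplx \<Delta>" "\<forall>i. fc \<Delta> i = (if i < m + 1 then hh r d 0 i else 0)" and
    Bex: "\<forall>k. 1 \<le> k \<and> k < r \<longrightarrow> (\<exists>Ls. lk \<Delta> m Ls \<and> (\<forall>i<m + 1. SL Ls i = hh r d k i))" and
    Cex: "\<forall>k. m + 1 \<le> k \<and> k < r \<longrightarrow> (\<exists>Ls. lk \<Delta> (m + 1) Ls \<and> (\<forall>i<m + 2. SL Ls i = hh r d k i))"
    unfolding Q_def mS using od by blast
  obtain B where B: "\<And>k. 1 \<le> k \<and> k < r \<Longrightarrow> lk \<Delta> m (B k) \<and> (\<forall>i<m + 1. SL (B k) i = hh r d k i)"
    using Bex by metis
  obtain C where C: "\<And>k. m + 1 \<le> k \<and> k < r \<Longrightarrow> lk \<Delta> (m + 1) (C k) \<and> (\<forall>i<m + 2. SL (C k) i = hh r d k i)"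
    using Cex by metis
  have Bj: "lk \<Delta> (m + 1) (B j) \<and> (\<forall>i<m + 1. SL (B j) i = hh r d j i) \<and> (\<forall>i\<ge>m + 1. SL (B j) i = 0)"
    if "1 \<le> j" "j < r" for j
  proof -
    have "lk \<Delta> m (B j) \<and> (\<forall>i<m + 1. SL (B j) i = hh r d j i)" using B that by blast
    then show ?thesis using lk_mono[of \<Delta> m "B j" \<Delta> "m + 1"] SL_lk_zero[of \<Delta> m "B j"] by auto
  qed
  have Cj: "lk \<Delta> (m + 1) (C j) \<and> (\<forall>i<m + 2. SL (C j) i = hh r d j i) \<and> (\<forall>i\<ge>m + 2. SL (C j) i = 0)"
    if "m + 1 \<le> j" "j < r" for j
  proof -
    have "lk \<Delta> (m + 1) (C j) \<and> (\<forall>i<m + 2. SL (C j) i = hh r d j i)" using C that by blast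
    then show ?thesis using SL_lk_zero[of \<Delta> "m + 1" "C j"] by auto
  qed
  define E where "E j = (if j \<le> d then B j else C j)" for j
  have Ej: "lk \<Delta> (m + 1) (E j) \<and> (\<forall>i<m + 1. SL (E j) i = hh r d j i) \<and>
      SL (E j) (m + 1) = (if j \<le> d then 0 else hh r d j (m + 1)) \<and> (\<forall>i\<ge>m + 2. SL (E j) i = 0)"
    if j: "1 \<le> j" "j < r" for j
  proof (cases "j \<le> d")
    case True
    then show ?thesis using Bj[OF j] unfolding E_def by auto
  next
    case False
    then have "m + 1 \<le> j" using dm by simp
    then show ?thesis using Cj[OF _ j(2)] False unfolding E_def by auto
  qed
  have Ec: "\<forall>j\<in>{1..<r}. \<forall>L\<in>set (E j). cplx L \<and> L \<subseteq> \<Delta>"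
  proof (intro ballI)
    fix j L assume j: "j \<in> {1..<r}" and L: "L \<in> set (E j)"
    then have "lk \<Delta> (m + 1) (E j)" using Ej by auto
    then show "cplx L \<and> L \<subseteq> \<Delta>" using L unfolding lk_def by blast
  qed
  from chain[OF D(1) Ec] obtain \<Delta>' where "cplx \<Delta>' \<and> \<Delta> \<subseteq> \<Delta>' \<and> (\<forall>i. fc \<Delta>' i = fc \<Delta> i + (\<Sum>j\<in>{1..<r}. SL (E j) i)) \<and>
     (\<forall>k. 1 \<le> k \<and> k \<le> r \<longrightarrow> (\<exists>\<Phi>. cplx \<Phi> \<and> \<Delta> \<subseteq> \<Phi> \<and> \<Phi> \<subseteq> \<Delta>' \<and> (\<forall>i. fc \<Phi> i = fc \<Delta> i + (\<Sum>j\<in>{1..<k}. SL (E j) i))))"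
    by (rule exE)
  then have D': "cplx \<Delta>'" "\<Delta> \<subseteq> \<Delta>'" "\<forall>i. fc \<Delta>' i = fc \<Delta> i + (\<Sum>j\<in>{1..<r}. SL (E j) i)"
    and Ph: "\<And>k. 1 \<le> k \<Longrightarrow> k \<le> r \<Longrightarrow> (\<exists>\<Phi>. cplx \<Phi> \<and> \<Delta> \<subseteq> \<Phi> \<and> \<Phi> \<subseteq> \<Delta>' \<and> (\<forall>i. fc \<Phi> i = fc \<Delta> i + (\<Sum>j\<in>{1..<k}. SL (E j) i)))"
    by auto
  have SE: "(\<Sum>j\<in>{a..<b}. SL (E j) i) = (\<Sum>j\<in>{a..<b}. hh r d j i)" if "1 \<le> a" "b \<le> r" "i < m + 1" for a b i
    by (rule sum.cong[OF refl]) (use Ej that in auto)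
  have SEz: "(\<Sum>j\<in>{a..<b}. SL (E j) i) = 0" if "1 \<le> a" "b \<le> r" "i \<ge> m + 2" for a b i
  proof (rule sum.neutral, rule ballI)
    fix j assume "j \<in> {a..<b}"
    then show "SL (E j) i = 0" using Ej[of j] that by auto
  qed
  have P0: "(\<Sum>j\<in>{0..d}. hh r d j (m + 1)) = 0" using hh_pair[OF r dm, of 0] by simp
  have SEm: "(\<Sum>j\<in>{1..<k}. SL (E j) (m + 1)) = (\<Sum>j<k. hh r d j (m + 1))" if k: "Suc d \<le> k" "k \<le> r" for k
  proof -
    have "(\<Sum>j\<in>{1..<k}. SL (E j) (m + 1)) = (\<Sum>j\<in>{1..<k}. if j \<le> d then 0 else hh r d j (m + 1))"
      by (rule sum.cong[OF refl]) (use Ej k in auto)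
    also have "\<dots> = (\<Sum>j<k. hh r d j (m + 1))" by (rule sum_skip[OF k(1) P0])
    finally show ?thesis .
  qed
  have PhF: "\<exists>\<Phi>. cplx \<Phi> \<and> \<Delta> \<subseteq> \<Phi> \<and> \<Phi> \<subseteq> \<Delta>' \<and>
      (\<forall>i. fc \<Phi> i = (if i < m + 1 then (\<Sum>j<k. hh r d j i) else if i = m + 1 then (\<Sum>j\<in>{1..<k}. SL (E j) (m + 1)) else 0))"
    if k: "1 \<le> k" "k \<le> r" for k
  proof -
    obtain \<Phi> where P: "cplx \<Phi>" "\<Delta> \<subseteq> \<Phi>" "\<Phi> \<subseteq> \<Delta>'" "\<forall>i. fc \<Phi> i = fc \<Delta> i + (\<Sum>j\<in>{1..<k}. SL (E j) i)"
      using Ph[OF k] by blast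
    have "fc \<Phi> i = (if i < m + 1 then (\<Sum>j<k. hh r d j i) else if i = m + 1 then (\<Sum>j\<in>{1..<k}. SL (E j) (m + 1)) else 0)" for i
    proof -
      consider "i < m + 1" | "i = m + 1" | "i \<ge> m + 2" by linarith
      then show ?thesis
      proof cases
        case 1
        then show ?thesis using P(4) D(2) SE[of 1 k i] k sum_lt_split0[OF k(1), of "\<lambda>j. hh r d j i"] by simp
      next
        case 2
        then show ?thesis using P(4) D(2) by simp
      next
        case 3
        then show ?thesis using P(4) D(2) SEz[of 1 k i] k by simp
      qed
    qed
    then show ?thesis using P by blast
  qed
  have hsplit: "hh r (Suc d) k i = (\<Sum>j\<in>{k..<r}. hh r d j i) + (if i = 0 then 0 else (\<Sum>j<k. hh r d j (i - 1)))"
    if "k \<le> r" for k i using hh_split[OF that r] .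
  have QA: "\<forall>i. fc \<Delta>' i = (if i < Suc d div 2 + 1 then hh r (Suc d) 0 i else 0)"
  proof
    fix i
    have h0: "hh r (Suc d) 0 i = (\<Sum>j<r. hh r d j i)" using hsplit[of 0 i] by (simp add: lessThan_atLeast0)
    consider "i < m + 1" | "i = m + 1" | "i \<ge> m + 2" by linarith
    then show "fc \<Delta>' i = (if i < Suc d div 2 + 1 then hh r (Suc d) 0 i else 0)"
    proof cases
      case 1
      then show ?thesis using D'(3) D(2) SE[of 1 r i] r mS h0 sum_lt_split0[OF r, of "\<lambda>j. hh r d j i"] by simp
    next
      case 2
      then show ?thesis using D'(3) D(2) SEm[of r] dr mS h0 by simp
    next
      case 3
      then show ?thesis using D'(3) D(2) SEz[of 1 r i] r mS by simp
    qed
  qed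
  have QB: "\<exists>Ls. lk \<Delta>' (m + 1) Ls \<and> (\<forall>i<m + 2. SL Ls i = hh r (Suc d) k i)" if k: "1 \<le> k" "k < r" for k
  proof -
    obtain \<Phi> where P: "cplx \<Phi>" "\<Delta> \<subseteq> \<Phi>" "\<Phi> \<subseteq> \<Delta>'"
      "\<forall>i. fc \<Phi> i = (if i < m + 1 then (\<Sum>j<k. hh r d j i) else if i = m + 1 then (\<Sum>j\<in>{1..<k}. SL (E j) (m + 1)) else 0)"
      using PhF[of k] k by auto
    obtain L0 where L0: "cplx L0" "L0 \<subseteq> \<Phi>" "\<forall>i. fc L0 i = (if i < m + 1 then fc \<Phi> i else 0)"
      using skel[OF P(1)] by blast
    have f0: "fc L0 0 = 1" using L0(3) P(4) hh_col0[OF r k(1)] by simp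
    define K where "K = {k..d - k}"
    have Ksub: "K \<subseteq> {k..<r}" unfolding K_def using dr by auto
    have PK: "(\<Sum>j\<in>K. hh r d j (m + 1)) = 0" unfolding K_def by (rule hh_pair[OF r dm])
    define G where "G j = (if j \<in> K then B j else C j)" for j
    have Gj: "lk \<Delta> (m + 1) (G j) \<and> (\<forall>i<m + 1. SL (G j) i = hh r d j i) \<and>
        SL (G j) (m + 1) = (if j \<in> K then 0 else hh r d j (m + 1))"
      if j: "j \<in> {k..<r}" for j
    proof (cases "j \<in> K")
      case True
      have "1 \<le> j" "j < r" using j k by auto
      then show ?thesis using Bj True unfolding G_def by auto
    next
      case False
      then have "m + 1 \<le> j" using j dm unfolding K_def by auto
      moreover have "j < r" using j by auto
      ultimately show ?thesis using Cj False unfolding G_def by auto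
    qed
    define Ls where "Ls = L0 # concat (map G [k..<r])"
    have "lk \<Delta>' (m + 1) Ls" unfolding Ls_def lk_Cons
    proof (intro conjI)
      show "lk \<Delta>' (m + 1) (concat (map G [k..<r]))"
      proof (rule lk_concat, rule ballI)
        fix j assume "j \<in> set [k..<r]"
        then have "lk \<Delta> (m + 1) (G j)" using Gj by auto
        then show "lk \<Delta>' (m + 1) (G j)" using lk_mono D'(2) by blast
      qed
    qed (use L0 f0 P in auto)
    moreover have "SL Ls i = hh r (Suc d) k i" if i: "i < m + 2" for i
    proof (cases "i < m + 1")
      case True
      have "SL Ls i = pc L0 i + (\<Sum>j\<in>{k..<r}. hh r d j i)"
        unfolding Ls_def using Gj True by (simp add: SL_concat_upt)
      also have "pc L0 i = (if i = 0 then 0 else (\<Sum>j<k. hh r d j (i - 1)))"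
        using L0(3) P(4) True unfolding pc_def by auto
      finally show ?thesis using hsplit[of k i] k by simp
    next
      case False
      then have im: "i = m + 1" using i by simp
      have "SL Ls i = pc L0 (m + 1) + (\<Sum>j\<in>{k..<r}. if j \<in> K then 0 else hh r d j (m + 1))"
        unfolding Ls_def im using Gj by (simp add: SL_concat_upt)
      also have "(\<Sum>j\<in>{k..<r}. if j \<in> K then 0 else hh r d j (m + 1)) = (\<Sum>j\<in>{k..<r}. hh r d j (m + 1))"
        using sum_remove0[OF _ Ksub PK] by simp
      also have "pc L0 (m + 1) = (\<Sum>j<k. hh r d j m)" using L0(3) P(4) unfolding pc_def by simp
      finally show ?thesis using hsplit[of k "m + 1"] k unfolding im by simp
    qed
    ultimately show ?thesis by blast
  qed
  have QC: "\<exists>Ls. lk \<Delta>' (m + 2) Ls \<and> (\<forall>i<m + 2. SL Ls i = hh r (Suc d) k i) \<and> SL Ls (m + 2) = t"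
    if k: "Suc d \<le> k" "k < r" and t: "0 \<le> t" "t \<le> hh r (Suc d) k (m + 2)" for k t
  proof -
    have k1: "1 \<le> k" using k by simp
    obtain \<Phi> where P: "cplx \<Phi>" "\<Delta> \<subseteq> \<Phi>" "\<Phi> \<subseteq> \<Delta>'"
      "\<forall>i. fc \<Phi> i = (if i < m + 1 then (\<Sum>j<k. hh r d j i) else if i = m + 1 then (\<Sum>j\<in>{1..<k}. SL (E j) (m + 1)) else 0)"
      using PhF[of k] k by auto
    have Ftop: "fc \<Phi> (m + 1) = (\<Sum>j<k. hh r d j (m + 1))" using P(4) SEm[of k] k by simp
    have neg: "(\<Sum>j\<in>{k..<r}. hh r d j (m + 2)) \<le> 0"
    proof (rule sum_nonpos)
      fix j assume "j \<in> {k..<r}"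
      then show "hh r d j (m + 2) \<le> 0" using HH_U3[OF r dm, of "int j"] unfolding hh_def by (simp add: add.commute)
    qed
    have "hh r (Suc d) k (m + 2) = (\<Sum>j\<in>{k..<r}. hh r d j (m + 2)) + (\<Sum>j<k. hh r d j (m + 1))"
      using hsplit[of k "m + 2"] k by simp
    then have tle: "t \<le> fc \<Phi> (m + 1)" using t neg Ftop by simp
    obtain L0 where L0: "cplx L0" "L0 \<subseteq> \<Phi>" "\<forall>i. fc L0 i = (if i < m + 1 then fc \<Phi> i else if i = m + 1 then t else 0)"
      using trunc[OF P(1) t(1) tle] by blast
    have f0: "fc L0 0 = 1" using L0(3) P(4) hh_col0[OF r k1] by simp
    have Ck: "lk \<Delta> (m + 1) (C j) \<and> (\<forall>i<m + 2. SL (C j) i = hh r d j i) \<and> (\<forall>i\<ge>m + 2. SL (C j) i = 0)"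
      if "j \<in> {k..<r}" for j
      using Cj that k dm by auto
    define Ls where "Ls = L0 # concat (map C [k..<r])"
    have "lk \<Delta>' (m + 2) Ls" unfolding Ls_def lk_Cons
    proof (intro conjI)
      show "lk \<Delta>' (m + 2) (concat (map C [k..<r]))"
      proof (rule lk_concat, rule ballI)
        fix j assume "j \<in> set [k..<r]"
        then have "lk \<Delta> (m + 1) (C j)" using Ck by auto
        then show "lk \<Delta>' (m + 2) (C j)" using lk_mono D'(2) by fastforce
      qed
    qed (use L0 f0 P in auto)
    moreover have "SL Ls i = hh r (Suc d) k i" if i: "i < m + 2" for i
    proof (cases "i < m + 1")
      case True
      have "SL Ls i = pc L0 i + (\<Sum>j\<in>{k..<r}. hh r d j i)"
        unfolding Ls_def using Ck True by (simp add: SL_concat_upt)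
      also have "pc L0 i = (if i = 0 then 0 else (\<Sum>j<k. hh r d j (i - 1)))"
        using L0(3) P(4) True unfolding pc_def by auto
      finally show ?thesis using hsplit[of k i] k by simp
    next
      case False
      then have im: "i = m + 1" using i by simp
      have "SL Ls i = pc L0 (m + 1) + (\<Sum>j\<in>{k..<r}. hh r d j (m + 1))"
        unfolding Ls_def im using Ck by (simp add: SL_concat_upt)
      also have "pc L0 (m + 1) = (\<Sum>j<k. hh r d j m)" using L0(3) P(4) unfolding pc_def by simp
      finally show ?thesis using hsplit[of k "m + 1"] k unfolding im by simp
    qed
    moreover have "SL Ls (m + 2) = t"
    proof -
      have "SL Ls (m + 2) = pc L0 (m + 2) + (\<Sum>j\<in>{k..<r}. SL (C j) (m + 2))"
        unfolding Ls_def by (simp add: SL_concat_upt)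
      also have "(\<Sum>j\<in>{k..<r}. SL (C j) (m + 2)) = 0" by (rule sum.neutral) (use Ck in auto)
      also have "pc L0 (m + 2) = t" using L0(3) unfolding pc_def by simp
      finally show ?thesis by simp
    qed
    ultimately show ?thesis by blast
  qed
  have ev: "even (Suc d)" using dm by simp
  show ?thesis unfolding Q_def mS
    using D'(1) QA QB QC mS dm ev by (intro exI[of _ \<Delta>']) auto
qed

lemma Q_all: "r \<ge> 1 \<Longrightarrow> 1 \<le> d \<Longrightarrow> d \<le> r \<Longrightarrow> Q r d"
proof (induction d)
  case 0 then show ?case by simp
next
  case (Suc d)
  show ?case
  proof (cases "d = 0")
    case True then show ?thesis using Q_base Suc by simp
  next
    case False
    then have Qd: "Q r d" using Suc by simp
    show ?thesis
    proof (cases "even d")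
      case True
      then obtain m where dm: "d = 2 * m" by (auto elim: evenE)
      then have "m \<ge> 1" using False by simp
      then show ?thesis using stepA[OF Suc.prems(1) Qd dm] Suc.prems by simp
    next
      case False
      then obtain m where dm: "d = 2 * m + 1" by (auto elim: oddE)
      then show ?thesis using stepB[OF Suc.prems(1) Qd dm] Suc.prems by simp
    qed
  qed
qed

lemma ghat_hh:
  assumes "k < r"
  shows "ghat r d k = map (hh r d k) [0..<d div 2 + 2]"
proof -
  have r: "r \<ge> 1" using assms by simp
  have "(if i = 0 then int (Ccount (r - 1) d (- int k))
         else int (Ccount (r - 1) d (int i * int r - int k)) - int (Ccount (r - 1) d ((int i - 1) * int r - int k)))
        = hh r d k i" for i
  proof -
    have cp: "\<And>n. int (Ccount (r - Suc 0) d n) = PP r d n" using Ccount_PP[OF r] by simp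
    show ?thesis unfolding hh_def HH_def using r by (simp add: cp PP_neg)
  qed
  then show ?thesis unfolding ghat_def using assms by simp
qed

lemma butlast_map_upt: "butlast (map f [0..<Suc n]) = map f [0..<n]"
  by simp

lemma gvec_hh:
  assumes "k < r"
  shows "gvec r d k = map (hh r d k) [0..<d div 2 + 1]"
  unfolding gvec_def ghat_hh[OF assms]
  using butlast_map_upt[of "hh r d k" "d div 2 + 1"] by simp

lemma take_rep: "take n (x # replicate n x) = replicate n x"
  by (induction n) auto

lemma zero_adm: "admissible f (replicate (length f) 0)"
  unfolding admissible_def by (intro exI[of _ "[]"]) (simp add: vsum_def)

theorem mainTheorem10:
  fixes r d :: nat
  assumes "1 \<le> d" and "d \<le> r"
  shows "is_fvector (gvec r d 0)
     \<and> (\<forall>k. 1 \<le> k \<and> k \<le> r \<longrightarrow> admissible (gvec r d 0) (gvec r d k))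
     \<and> (odd d \<longrightarrow> (\<forall>k. d \<le> 2 * k \<longrightarrow> admissible (gvec r d 0 @ [0]) (ghat r d k)))"
proof -
  have r: "r \<ge> 1" using assms by simp
  define m where "m = d div 2"
  from Q_all[OF r assms] obtain \<Delta> where D: "cplx \<Delta>" "\<forall>i. fc \<Delta> i = (if i < m + 1 then hh r d 0 i else 0)" and
    Bex: "\<forall>k. 1 \<le> k \<and> k < r \<longrightarrow> (\<exists>Ls. lk \<Delta> m Ls \<and> (\<forall>i<m + 1. SL Ls i = hh r d k i))" and
    Cex: "odd d \<longrightarrow> (\<forall>k. m + 1 \<le> k \<and> k < r \<longrightarrow> (\<exists>Ls. lk \<Delta> (m + 1) Ls \<and> (\<forall>i<m + 2. SL Ls i = hh r d k i)))"
    unfolding Q_def m_def by blast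
  have g0: "gvec r d 0 = map (fc \<Delta>) [0..<m + 1]"
    unfolding gvec_hh[OF r[unfolded One_nat_def, THEN Suc_le_lessD]] m_def[symmetric] using D(2) by simp
  have f00: "fc \<Delta> 0 = 1" using D(2) hh_00[OF r] by simp
  have fz: "\<forall>i\<ge>m + 1. fc \<Delta> i = 0" using D(2) by simp
  have I: "is_fvector (gvec r d 0)" unfolding g0 by (rule fvec_of[OF D(1) f00 fz]) simp
  have II: "admissible (gvec r d 0) (gvec r d k)" if k: "1 \<le> k" "k \<le> r" for k
  proof (cases "k = r")
    case True
    have "gvec r d k = replicate (length (gvec r d 0)) 0"
      unfolding True gvec_def ghat_def g0 by (simp add: butlast_conv_take m_def take_rep)
    then show ?thesis using zero_adm by simp
  next
    case False
    then have kr: "k < r" using k by simp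
    obtain Ls where Ls: "lk \<Delta> m Ls" "\<forall>i<m + 1. SL Ls i = hh r d k i" using Bex k kr by blast
    have gk: "gvec r d k = map (SL Ls) [0..<m + 1]" unfolding gvec_hh[OF kr] m_def[symmetric] using Ls(2) by simp
    show ?thesis
    proof (cases "m = 0")
      case True
      have "Ls = []"
      proof (rule ccontr)
        assume "Ls \<noteq> []"
        then obtain L where "L \<in> set Ls" by (cases Ls) auto
        then show False using Ls(1) True unfolding lk_def by auto
      qed
      then have "gvec r d k = replicate (length (gvec r d 0)) 0" unfolding gk g0 using True by simp
      then show ?thesis using zero_adm by simp
    next
      case False
      have "admissible (map (fc \<Delta>) [0..<m + 1]) (map (SL Ls) [0..<m + 1])"
        by (rule R1[OF D(1)]) (use False Ls(1) in \<open>auto simp: lk_def\<close>)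
      then show ?thesis unfolding g0 gk .
    qed
  qed
  have III: "admissible (gvec r d 0 @ [0]) (ghat r d k)" if od: "odd d" and k: "d \<le> 2 * k" for k
  proof (cases "k < r")
    case False
    have "ghat r d k = replicate (length (gvec r d 0 @ [0])) 0"
      unfolding ghat_def g0 using False by (simp add: m_def)
    then show ?thesis using zero_adm[of "gvec r d 0 @ [0]"] by simp
  next
    case True
    have "m + 1 \<le> k" using od k unfolding m_def by presburger
    then obtain Ls where Ls: "lk \<Delta> (m + 1) Ls" "\<forall>i<m + 2. SL Ls i = hh r d k i" using Cex od True by blast
    have gk: "ghat r d k = map (SL Ls) [0..<m + 2]" unfolding ghat_hh[OF True] m_def[symmetric] using Ls(2) by simp
    have f: "gvec r d 0 @ [0] = map (fc \<Delta>) [0..<m + 2]" unfolding g0 using fz by simp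
    have "admissible (map (fc \<Delta>) [0..<m + 2]) (map (SL Ls) [0..<m + 2])"
      by (rule R1[OF D(1)]) (use Ls(1) in \<open>auto simp: lk_def\<close>)
    then show ?thesis unfolding f gk .
  qed
  show ?thesis using I II III by blast
qed

end
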